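(* Let $H(D)$ be as defined below. Under a Reidemeister move on a knot diagram $D$: $H$ is unchanged by an RI move and by an unmatched RII move; $H$ increases by $1$ under a matched RII move that creates two crossings; and under an RIII move $H$ changes by $\pm1$, the change being equal to the change of Arnold's strangeness invariant $St$ of the underlying spherical curve $\widehat D$.
   Context: A knot diagram is a generic oriented immersed circle in $S^2$ with over/under information at each crossing; $\widehat D$ denotes its underlying immersed curve. An RII move is matched if the two strands involved are identically oriented, unmatched if oppositely oriented. For a crossing $a$, the smoothing $D^a$ is the two-component oriented link obtained by the orientation-preserving cut-and-paste at $a$ (first component: the one entering along the overcrossing arc and leaving along the undercrossing arc), and $lk$ is its linking number. With $\mathbb{G}_{\mathbb{Z}}$ the free abelian group on $\{X_n,Y_n\}_{n\in\mathbb{Z}}$, $I_{lk}(D)=\sum_{a\text{ positive}}X_{lk(D^a)}+\sum_{a\text{ negative}}Y_{lk(D^a)}$ (signs by the right-hand rule), and $h(X_n)=-n$, $h(Y_n)=n$ extended linearly, $H(D)=h(I_{lk}(D))$. $St$ is Arnold's strangeness invariant of generic immersed curves in $S^2$: it is unchanged under self-tangency moves and changes by $\pm1$ under triple point moves according to Arnold's sign convention for triple points. *)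

theory Defs
  imports Main
begin

text \<open>Knot diagrams are modelled combinatorially by signed Gauss words.
  A diagram is a pair (w, s): w is the cyclic Gauss word (a list, read up to
  rotation) recording, for each passage through a crossing, the crossing label
  and whether the strand passes over (True) or under (False); s gives the sign
  (+1 / -1, right-hand rule) of every crossing.\<close>

type_synonym 'c diagram = "('c \<times> bool) list \<times> ('c \<Rightarrow> int)"

definition crossings :: "'c diagram \<Rightarrow> 'c set" where
  "crossings D = fst ` set (fst D)"

definition knot_diagram :: "'c diagram \<Rightarrow> bool" where
  "knot_diagram D \<longleftrightarrow> distinct (fst D) \<and>
     (\<forall>c \<in> crossings D. (c, True) \<in> set (fst D) \<and> (c, False) \<in> set (fst D)
        \<and> snd D c \<in> {1, -1})"

text \<open>Smoothing at a crossing a: the two components, each given as the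
  sequence of crossing passages it contains.  Component 1 runs from the
  undercrossing passage of a to the overcrossing passage of a (so it enters a
  along the overcrossing arc and leaves along the undercrossing arc);
  component 2 is the rest.\<close>

definition smoothing :: "('c \<times> bool) list \<Rightarrow> 'c \<Rightarrow> ('c \<times> bool) list \<times> ('c \<times> bool) list" where
  "smoothing w a =
    (let r = tl (dropWhile (\<lambda>x. x \<noteq> (a, False)) w) @ takeWhile (\<lambda>x. x \<noteq> (a, False)) w
     in (takeWhile (\<lambda>x. x \<noteq> (a, True)) r, tl (dropWhile (\<lambda>x. x \<noteq> (a, True)) r)))"

definition link_lk :: "('c \<times> bool) list \<times> ('c \<times> bool) list \<Rightarrow> ('c \<Rightarrow> int) \<Rightarrow> int" where
  "link_lk L s = (\<Sum>b \<in> {b. (b, True) \<in> set (fst L) \<and> (b, False) \<in> set (snd L)}. s b)"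

definition lk_smooth :: "'c diagram \<Rightarrow> 'c \<Rightarrow> int" where
  "lk_smooth D a = link_lk (smoothing (fst D) a) (snd D)"

text \<open>The free abelian group G_Z on X_n, Y_n (n in Z), as finitely supported
  coefficient functions.\<close>

datatype gen = X int | Y int

type_synonym GZ = "gen \<Rightarrow> int"

definition I_lk :: "'c diagram \<Rightarrow> GZ" where
  "I_lk D = (\<lambda>g. (\<Sum>a \<in> crossings D.
      if snd D a = 1 then (if g = X (lk_smooth D a) then 1 else 0)
      else (if g = Y (lk_smooth D a) then 1 else 0)))"

fun hgen :: "gen \<Rightarrow> int" where
  "hgen (X n) = - n"
| "hgen (Y n) = n"

definition h :: "GZ \<Rightarrow> int" where
  "h f = (\<Sum>g \<in> {g. f g \<noteq> 0}. f g * hgen g)"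

definition H :: "'c diagram \<Rightarrow> int" where
  "H D = h (I_lk D)"

definition agree_on_old :: "'c diagram \<Rightarrow> 'c diagram \<Rightarrow> bool" where
  "agree_on_old D D' \<longleftrightarrow> (\<forall>x \<in> crossings D. snd D' x = snd D x)"

definition RI_move :: "'c diagram \<Rightarrow> 'c diagram \<Rightarrow> bool" where
  "RI_move D D' \<longleftrightarrow> (\<exists>m n c b. c \<notin> crossings D \<and>
      rotate n (fst D') = (c, b) # (c, \<not> b) # rotate m (fst D) \<and> agree_on_old D D')"

text \<open>Matched: the two strands are traversed in the same
  direction (both meet c before d); unmatched: opposite directions.\<close>
definition RII_matched_move :: "'c diagram \<Rightarrow> 'c diagram \<Rightarrow> bool" where
  "RII_matched_move D D' \<longleftrightarrow> (\<exists>m n c d u v. c \<noteq> d \<and> c \<notin> crossings D \<and> d \<notin> crossings D \<and>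
      rotate m (fst D) = u @ v \<and>
      rotate n (fst D') = (c, True) # (d, True) # u @ [(c, False), (d, False)] @ v \<and>
      snd D' d = - snd D' c \<and> agree_on_old D D')"

definition RII_unmatched_move :: "'c diagram \<Rightarrow> 'c diagram \<Rightarrow> bool" where
  "RII_unmatched_move D D' \<longleftrightarrow> (\<exists>m n c d u v. c \<noteq> d \<and> c \<notin> crossings D \<and> d \<notin> crossings D \<and>
      rotate m (fst D) = u @ v \<and>
      rotate n (fst D') = (c, True) # (d, True) # u @ [(d, False), (c, False)] @ v \<and>
      snd D' d = - snd D' c \<and> agree_on_old D D')"

text \<open>Strands 1,2,3 are the three branches through the vanishing
  triangle, numbered in the cyclic order in which the curve visits them;
  a = crossing of strands 1,2, b = of 2,3, c = of 3,1; h1,h2,h3 are the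
  (distinct) heights, the higher strand passing over.  The flag f_k is True
  iff strand k meets its crossing with strand k-1 before its crossing with
  strand k+1 (indices mod 3), i.e. iff, in the triangle of the diagram, side
  k is directed along the orientation of the triangle given by the cyclic
  order 1,2,3.  The move reverses the order on every strand.  The sign
  condition (with global orientation mu) is exactly the condition that the
  crossing signs come from three oriented lines in the plane bounding a
  triangle with these orders.\<close>

definition dlt :: "bool \<Rightarrow> int" where
  "dlt f = (if f then 1 else -1)"

definition psgn :: "nat \<Rightarrow> nat \<Rightarrow> int" where
  "psgn hi hj = (if hi > hj then 1 else -1)"

definition P1 :: "'c \<Rightarrow> 'c \<Rightarrow> 'c \<Rightarrow> nat \<Rightarrow> nat \<Rightarrow> nat \<Rightarrow> bool \<Rightarrow> ('c \<times> bool) list" where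
  "P1 a b c h1 h2 h3 f = (if f then [(c, h1 > h3), (a, h1 > h2)] else [(a, h1 > h2), (c, h1 > h3)])"

definition P2 :: "'c \<Rightarrow> 'c \<Rightarrow> 'c \<Rightarrow> nat \<Rightarrow> nat \<Rightarrow> nat \<Rightarrow> bool \<Rightarrow> ('c \<times> bool) list" where
  "P2 a b c h1 h2 h3 f = (if f then [(a, h2 > h1), (b, h2 > h3)] else [(b, h2 > h3), (a, h2 > h1)])"

definition P3 :: "'c \<Rightarrow> 'c \<Rightarrow> 'c \<Rightarrow> nat \<Rightarrow> nat \<Rightarrow> nat \<Rightarrow> bool \<Rightarrow> ('c \<times> bool) list" where
  "P3 a b c h1 h2 h3 f = (if f then [(b, h3 > h2), (c, h3 > h1)] else [(c, h3 > h1), (b, h3 > h2)])"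

text \<open>RIII_move D D' q: D' arises from D by an RIII move, and q is Arnold's
  number for the newborn vanishing triangle (the triangle of D'): the number
  of its sides whose direction agrees with the orientation of the triangle
  given by the cyclic order of the sides along the curve.\<close>
definition RIII_move :: "'c diagram \<Rightarrow> 'c diagram \<Rightarrow> nat \<Rightarrow> bool" where
  "RIII_move D D' q \<longleftrightarrow> (\<exists>m n a b c h1 h2 h3 f1 f2 f3 A B C mu.
      distinct [a, b, c] \<and> distinct [h1, h2, h3] \<and>
      rotate m (fst D) = P1 a b c h1 h2 h3 f1 @ A @ P2 a b c h1 h2 h3 f2 @ B @ P3 a b c h1 h2 h3 f3 @ C \<and>
      rotate n (fst D') = P1 a b c h1 h2 h3 (\<not> f1) @ A @ P2 a b c h1 h2 h3 (\<not> f2) @ B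
                           @ P3 a b c h1 h2 h3 (\<not> f3) @ C \<and>
      mu \<in> {1, -1} \<and>
      snd D a = mu * dlt f1 * dlt f2 * psgn h1 h2 \<and>
      snd D b = mu * dlt f2 * dlt f3 * psgn h2 h3 \<and>
      snd D c = mu * dlt f3 * dlt f1 * psgn h3 h1 \<and>
      agree_on_old D D' \<and>
      q = card {k \<in> {1::nat, 2, 3}. \<not> [f1, f2, f3] ! (k - 1)})"

text \<open>Change of Arnold's strangeness St under a triple point move: +1 if the
  newborn vanishing triangle is positive, i.e. its sign (-1)^q is +1, and -1
  otherwise (Arnold's convention).\<close>
definition St_change :: "nat \<Rightarrow> int" where
  "St_change q = (-1) ^ q"

end

theory Submission
  imports Defs
begin



definition LKs :: "('c\<times>bool) set \<Rightarrow> ('c\<times>bool) set \<Rightarrow> ('c\<Rightarrow>int) \<Rightarrow> int" where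
  "LKs S T s = (\<Sum>b\<in>{b. (b,True)\<in>S \<and> (b,False)\<in>T}. s b)"

definition rr :: "('c \<times> bool) list \<Rightarrow> 'c \<Rightarrow> ('c \<times> bool) list" where
  "rr w a = tl (dropWhile (\<lambda>x. x \<noteq> (a, False)) w) @ takeWhile (\<lambda>x. x \<noteq> (a, False)) w"

lemma smoothing_rr: "smoothing w a = (takeWhile (\<lambda>x. x \<noteq> (a, True)) (rr w a), tl (dropWhile (\<lambda>x. x \<noteq> (a, True)) (rr w a)))"
  by (simp add: smoothing_def rr_def Let_def)

lemma rr_rotate1: assumes "distinct w" "(a,False) \<in> set w" shows "rr (rotate1 w) a = rr w a"
proof (cases w)
  case Nil then show ?thesis by simp
next
  case (Cons x w')
  show ?thesis
  proof (cases "x = (a,False)")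
    case True
    with assms Cons have "(a,False) \<notin> set w'" by auto
    then have "dropWhile (\<lambda>x. x \<noteq> (a, False)) w' = []" "takeWhile (\<lambda>x. x \<noteq> (a, False)) w' = w'"
      by (auto simp: dropWhile_eq_Nil_conv takeWhile_eq_all_conv)
    then show ?thesis using Cons True by (simp add: rr_def dropWhile_append takeWhile_append)
  next
    case False
    with assms Cons have m: "(a,False) \<in> set w'" by auto
    then have ne: "dropWhile (\<lambda>x. x \<noteq> (a, False)) w' \<noteq> []" by (auto simp: dropWhile_eq_Nil_conv)
    have "\<not> (\<forall>y\<in>set w'. y \<noteq> (a,False))" using m by auto
    then show ?thesis using Cons False ne using m by (auto simp add: rr_def dropWhile_append takeWhile_append)
  qed
qed

lemma rr_rotate: assumes "distinct w" "(a,False) \<in> set w" shows "rr (rotate n w) a = rr w a"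
  using assms
proof (induction n)
  case 0 then show ?case by simp
next
  case (Suc n)
  have "rr (rotate (Suc n) w) a = rr (rotate1 (rotate n w)) a" by simp
  also have "\<dots> = rr (rotate n w) a" using Suc.prems by (intro rr_rotate1) auto
  finally show ?case using Suc by simp
qed

lemma smoothing_rotate: assumes "distinct w" "(a,False) \<in> set w" shows "smoothing (rotate n w) a = smoothing w a"
  using rr_rotate[OF assms] by (simp add: smoothing_rr)

lemma smoothing_form: assumes "distinct ((a,False)#Xs@(a,True)#Ys)"
  shows "smoothing ((a,False)#Xs@(a,True)#Ys) a = (Xs, Ys)"
proof -
  have "rr ((a,False)#Xs@(a,True)#Ys) a = Xs@(a,True)#Ys" by (simp add: rr_def)
  moreover have "(a,True) \<notin> set Xs" using assms by auto
  ultimately show ?thesis by (simp add: smoothing_rr takeWhile_append dropWhile_append takeWhile_eq_all_conv dropWhile_eq_Nil_conv)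
qed

lemma lk_decomp:
  assumes d: "distinct (fst D)" and r: "rotate n (fst D) = U@(a,ov)#Xs@(a,\<not>ov)#V"
  shows "lk_smooth D a = LKs (if ov then set V \<union> set U else set Xs) (if ov then set Xs else set V \<union> set U) (snd D)"
proof -
  let ?L = "U@(a,ov)#Xs@(a,\<not>ov)#V"
  have dL: "distinct ?L" using d r by (metis distinct_rotate)
  have inL: "(a,False) \<in> set ?L" by (cases ov) auto
  have s1: "smoothing (fst D) a = smoothing ?L a"
    using smoothing_rotate[OF d, of a n] inL r by (metis set_rotate)
  show ?thesis
  proof (cases ov)
    case False
    have "rotate (length U) ?L = (a,False)#Xs@(a,True)#V@U" using False by (simp add: rotate_append)
    moreover have "distinct ((a,False)#Xs@(a,True)#V@U)" using dL False by auto
    ultimately have "smoothing ?L a = (Xs, V@U)"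
      using smoothing_rotate[OF dL inL, of "length U"] smoothing_form by metis
    then show ?thesis using s1 False by (simp add: lk_smooth_def link_lk_def LKs_def)
  next
    case True
    have "?L = (U@(a,True)#Xs) @ ((a,False)#V)" using True by simp
    then have "rotate (length (U@(a,True)#Xs)) ?L = (a,False)#V@U@(a,True)#Xs"
      by (metis rotate_append append_Cons append_assoc)
    moreover have "distinct ((a,False)#V@U@(a,True)#Xs)" using dL True by auto
    ultimately have "smoothing ?L a = (V@U, Xs)"
      using smoothing_rotate[OF dL inL, of "length (U@(a,True)#Xs)"] smoothing_form[of a "V@U" Xs]
      by (metis append_assoc)
    then show ?thesis using s1 True by (simp add: lk_smooth_def link_lk_def LKs_def Un_commute)
  qed
qed



lemma if_distrib_mult: "(if P then (1::int) else 0) * x = (if P then x else 0)" by simp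

lemma finite_crossings: "finite (crossings D)" by (simp add: crossings_def)

lemma H_formula:
  assumes sg: "\<forall>a\<in>crossings D. snd D a \<in> {1,-1}"
  shows "H D = - (\<Sum>a\<in>crossings D. snd D a * lk_smooth D a)"
proof -
  define Cr where "Cr = crossings D"
  define G where "G a = (if snd D a = 1 then X (lk_smooth D a) else Y (lk_smooth D a))" for a
  have fin: "finite Cr" by (simp add: Cr_def finite_crossings)
  have I: "I_lk D g = (\<Sum>a\<in>Cr. if G a = g then 1 else 0)" for g
    unfolding I_lk_def Cr_def G_def by (rule sum.cong) auto
  have supp: "{g. I_lk D g \<noteq> 0} = G ` Cr"
  proof -
    have "I_lk D g \<noteq> 0 \<longleftrightarrow> g \<in> G ` Cr" for g
      unfolding I using fin by (subst sum_nonneg_eq_0_iff) auto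
    then show ?thesis by auto
  qed
  have "H D = (\<Sum>g\<in>G ` Cr. (\<Sum>a\<in>Cr. if G a = g then 1 else 0) * hgen g)"
    unfolding H_def h_def supp by (simp add: I)
  also have "\<dots> = (\<Sum>g\<in>G ` Cr. \<Sum>a\<in>Cr. if G a = g then hgen g else 0)"
    by (simp add: sum_distrib_right if_distrib_mult)
  also have "\<dots> = (\<Sum>a\<in>Cr. \<Sum>g\<in>G ` Cr. if G a = g then hgen g else 0)"
    by (rule sum.swap)
  also have "\<dots> = (\<Sum>a\<in>Cr. hgen (G a))"
    using fin by (intro sum.cong refl) (simp add: sum.delta)
  also have "\<dots> = (\<Sum>a\<in>Cr. - (snd D a * lk_smooth D a))"
    using sg unfolding Cr_def G_def by (intro sum.cong refl) auto
  finally show ?thesis by (simp add: Cr_def sum_negf)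
qed

lemma decomp_exists:
  assumes "(a,False) \<in> set L" "(a,True) \<in> set L"
  shows "\<exists>U ov Xs V. L = U@(a,ov)#Xs@(a,\<not>ov)#V"
proof -
  obtain p q where L: "L = p@(a,False)#q" using assms(1) by (meson split_list)
  show ?thesis
  proof (cases "(a,True) \<in> set q")
    case True
    then obtain q1 q2 where "q = q1@(a,True)#q2" by (meson split_list)
    then show ?thesis using L by (metis (full_types))
  next
    case False
    then have "(a,True) \<in> set p" using assms(2) L by auto
    then obtain p1 p2 where "p = p1@(a,True)#p2" by (meson split_list)
    then have "L = p1@(a,True)#p2@(a,\<not>True)#q" using L by simp
    then show ?thesis by blast
  qed
qed

lemma mk:
  assumes "A@(m#B) = P@Q@R" "m \<notin> set Q"
  shows "(\<exists>W. A = P@Q@W \<and> R = W@m#B) \<or> (\<exists>W. P = A@m#W \<and> B = W@Q@R)"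
  using assms
proof (induction A arbitrary: P Q)
  case Nil
  then show ?case
  proof (cases P)
    case Nil
    with Nil.prems show ?thesis by (cases Q) auto
  next
    case (Cons p P')
    with Nil.prems show ?thesis by auto
  qed
next
  case (Cons a A')
  show ?case
  proof (cases P)
    case (Cons p P')
    with Cons.prems have "A'@m#B = P'@Q@R" by simp
    from Cons.IH[OF this Cons.prems(2)] Cons.prems \<open>P = p#P'\<close> show ?thesis by auto
  next
    case Nil
    show ?thesis
    proof (cases Q)
      case Nil2: Nil
      with Nil Cons.prems show ?thesis by auto
    next
      case (Cons q Q')
      with Nil Cons.prems have e: "A'@m#B = []@Q'@R" "q = a" by auto
      have "m \<notin> set Q'" using Cons Cons.prems by auto
      from Cons.IH[OF e(1) this] show ?thesis using Nil Cons e by auto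
    qed
  qed
qed

lemma block_loc:
  assumes "U@(x,ov)#Xs@(x,\<not>ov)#V = P@Q@R" "(x,True) \<notin> set Q" "(x,False) \<notin> set Q"
  shows "(\<exists>W. U = P@Q@W \<and> R = W@(x,ov)#Xs@(x,\<not>ov)#V)
       \<or> (\<exists>W1 W2. Xs = W1@Q@W2 \<and> P = U@(x,ov)#W1 \<and> R = W2@(x,\<not>ov)#V)
       \<or> (\<exists>W. P = U@(x,ov)#Xs@(x,\<not>ov)#W \<and> V = W@Q@R)"
proof -
  have nm: "(x,b) \<notin> set Q" for b using assms by (cases b) auto
  from mk[OF assms(1) nm] show ?thesis
  proof
    assume "\<exists>W. P = U @ (x, ov) # W \<and> Xs @ (x, \<not> ov) # V = W @ Q @ R"
    then obtain W where W: "P = U @ (x, ov) # W" "Xs @ (x, \<not> ov) # V = W @ Q @ R" by blast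
    from mk[OF W(2) nm] W(1) show ?thesis by auto
  qed auto
qed




lemma LKs_cong:
  assumes "\<And>y. (y,True)\<in>S \<and> (y,False)\<in>T \<longleftrightarrow> (y,True)\<in>S' \<and> (y,False)\<in>T'"
    "\<And>y. (y,True)\<in>S \<Longrightarrow> (y,False)\<in>T \<Longrightarrow> s y = s' y"
  shows "LKs S T s = LKs S' T' s'"
  unfolding LKs_def using assms by (intro sum.cong) auto

lemma LKs_empty1: "LKs {} T s = 0" by (simp add: LKs_def)
lemma LKs_empty2: "LKs S {} s = 0" by (simp add: LKs_def)

lemma LKs_split:
  assumes "finite S" "finite K"
  shows "LKs S T s = LKs {p\<in>S. fst p \<notin> K} {p\<in>T. fst p \<notin> K} s
     + (\<Sum>y\<in>K. if (y,True)\<in>S \<and> (y,False)\<in>T then s y else 0)"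
proof -
  let ?I = "{b. (b,True)\<in>S \<and> (b,False)\<in>T}"
  have fI: "finite ?I"
  proof -
    have "?I \<subseteq> fst ` S" by force
    then show ?thesis using assms(1) finite_subset by blast
  qed
  have e1: "{b. (b,True)\<in>{p\<in>S. fst p \<notin> K} \<and> (b,False)\<in>{p\<in>T. fst p \<notin> K}} = ?I - K" by auto
  have "LKs S T s = sum s (?I - K) + sum s (?I \<inter> K)"
  proof -
    have "sum s ?I = sum s (?I - (?I \<inter> K)) + sum s (?I \<inter> K)"
      using fI by (intro sum.subset_diff) auto
    moreover have "?I - (?I \<inter> K) = ?I - K" by auto
    ultimately show ?thesis unfolding LKs_def by simp
  qed
  also have "sum s (?I \<inter> K) = (\<Sum>y\<in>K. if (y,True)\<in>S \<and> (y,False)\<in>T then s y else 0)"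
    using assms(2) by (simp add: sum.inter_filter Int_def conj_commute)
  finally show ?thesis unfolding LKs_def e1 .
qed

lemma kd_signs: "knot_diagram D \<Longrightarrow> \<forall>a\<in>crossings D. snd D a \<in> {1,-1}"
  by (auto simp: knot_diagram_def)

lemma kd_pass: "knot_diagram D \<Longrightarrow> x \<in> crossings D \<Longrightarrow> (x,True) \<in> set (fst D) \<and> (x,False) \<in> set (fst D)"
  by (auto simp: knot_diagram_def)

lemma crossings_rot: "crossings D = fst ` set (rotate n (fst D))"
  by (simp add: crossings_def)

lemma RI_case:
  assumes kd: "knot_diagram D" and kd': "knot_diagram D'" and mv: "RI_move D D'"
  shows "H D' = H D"
proof -
  obtain m n c b where c: "c \<notin> crossings D"
    and r: "rotate n (fst D') = (c, b) # (c, \<not> b) # rotate m (fst D)" and ag: "agree_on_old D D'"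
    using mv unfolding RI_move_def by blast
  let ?L = "rotate m (fst D)"
  have dD: "distinct (fst D)" and dD': "distinct (fst D')" using kd kd' by (auto simp: knot_diagram_def)
  have crD: "crossings D = fst ` set ?L" by (rule crossings_rot)
  have crD': "crossings D' = insert c (crossings D)"
    using crossings_rot[of D' n] r crD by auto
  have old: "lk_smooth D' x = lk_smooth D x" if x: "x \<in> crossings D" for x
  proof -
    have t: "(x,True) \<in> set ?L" and f: "(x,False) \<in> set ?L" using kd_pass[OF kd x] by auto
    obtain U ov Xs V where L: "?L = U@(x,ov)#Xs@(x,\<not>ov)#V" using decomp_exists[OF f t] by blast
    have nc: "(c,bb) \<notin> set U \<and> (c,bb) \<notin> set Xs \<and> (c,bb) \<notin> set V" for bb
      using c unfolding crD L by force
    have l1: "lk_smooth D x = LKs (if ov then set V \<union> set U else set Xs) (if ov then set Xs else set V \<union> set U) (snd D)"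
      by (rule lk_decomp[OF dD L])
    have "rotate n (fst D') = ((c, b) # (c, \<not> b) # U)@(x,ov)#Xs@(x,\<not>ov)#V" using r L by simp
    then have l2: "lk_smooth D' x = LKs (if ov then set V \<union> set ((c, b) # (c, \<not> b) # U) else set Xs) (if ov then set Xs else set V \<union> set ((c, b) # (c, \<not> b) # U)) (snd D')"
      by (rule lk_decomp[OF dD'])
    have sg: "snd D' y = snd D y" if "(y,True) \<in> set U \<union> set Xs \<union> set V" for y
      using ag that unfolding agree_on_old_def crD L by force
    show ?thesis unfolding l1 l2
      by (rule LKs_cong) (use nc sg in \<open>auto split: if_splits\<close>)
  qed
  have new: "lk_smooth D' c = 0"
  proof -
    have "rotate n (fst D') = []@(c,b)#[]@(c,\<not>b)#?L" using r by simp
    from lk_decomp[OF dD' this] show ?thesis by (simp add: LKs_empty1 LKs_empty2)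
  qed
  have "H D' = - (\<Sum>a\<in>insert c (crossings D). snd D' a * lk_smooth D' a)"
    using H_formula[OF kd_signs[OF kd']] crD' by simp
  also have "\<dots> = - (\<Sum>a\<in>crossings D. snd D' a * lk_smooth D' a)"
    using c new by (simp add: finite_crossings)
  also have "\<dots> = - (\<Sum>a\<in>crossings D. snd D a * lk_smooth D a)"
    using old ag by (simp add: agree_on_old_def)
  also have "\<dots> = H D" using H_formula[OF kd_signs[OF kd]] by simp
  finally show ?thesis .
qed




lemma ins_decomp:
  assumes "P@R = U@(x,ov)#Xs@(x,\<not>ov)#V" "\<And>b. (x,b)\<notin>set E"
  shows "\<exists>U' Xs' V'. P@E@R = U'@(x,ov)#Xs'@(x,\<not>ov)#V' \<and>
     ((set V' \<union> set U' = set V \<union> set U \<union> set E \<and> set Xs' = set Xs) \<or>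
      (set V' \<union> set U' = set V \<union> set U \<and> set Xs' = set Xs \<union> set E))"
proof -
  have "U@(x,ov)#Xs@(x,\<not>ov)#V = P@[]@R" using assms(1) by simp
  from block_loc[OF this, simplified] show ?thesis
  proof (elim disjE exE conjE)
    fix W assume "U = P @ W" "R = W @ (x, ov) # Xs @ (x, \<not> ov) # V"
    then show ?thesis by (intro exI[of _ "P@E@W"] exI[of _ Xs] exI[of _ V]) auto
  next
    fix W1 W2 assume "Xs = W1 @ W2" "P = U @ (x, ov) # W1" "R = W2 @ (x, \<not> ov) # V"
    then show ?thesis by (intro exI[of _ U] exI[of _ "W1@E@W2"] exI[of _ V]) auto
  next
    fix W assume "P = U @ (x, ov) # Xs @ (x, \<not> ov) # W" "V = W @ R"
    then show ?thesis by (intro exI[of _ U] exI[of _ Xs] exI[of _ "W@E@R"]) auto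
  qed
qed

lemma LKs_pair:
  assumes "c \<noteq> d" "s d = - s c" "finite S'"
    "{p\<in>S'. fst p \<notin> {c,d}} = S" "{p\<in>T'. fst p \<notin> {c,d}} = T"
    "(c,True)\<in>S' \<longleftrightarrow> (d,True)\<in>S'" "(c,False)\<in>T' \<longleftrightarrow> (d,False)\<in>T'"
  shows "LKs S' T' s = LKs S T s"
proof -
  have "LKs S' T' s = LKs S T s + (\<Sum>y\<in>{c,d}. if (y,True)\<in>S' \<and> (y,False)\<in>T' then s y else 0)"
    using LKs_split[OF assms(3), of "{c,d}" T' s] assms(4,5) by simp
  then show ?thesis using assms by simp
qed

lemma RII_old:
  assumes kd: "knot_diagram D" and kd': "knot_diagram D'" and cd: "c \<noteq> d" "c \<notin> crossings D" "d \<notin> crossings D"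
    and r: "rotate m (fst D) = u@v" and r': "rotate n (fst D') = (c,True)#(d,True)#u@E2@v"
    and E2: "set E2 = {(c,False),(d,False)}" and sg: "snd D' d = - snd D' c" and ag: "agree_on_old D D'"
    and x: "x \<in> crossings D"
  shows "lk_smooth D' x = lk_smooth D x"
proof -
  let ?L = "rotate m (fst D)"
  have dD: "distinct (fst D)" and dD': "distinct (fst D')" using kd kd' by (auto simp: knot_diagram_def)
  have crD: "crossings D = fst ` set ?L" by (rule crossings_rot)
  have t: "(x,True) \<in> set ?L" and f: "(x,False) \<in> set ?L" using kd_pass[OF kd x] by auto
  obtain U ov Xs V where L: "?L = U@(x,ov)#Xs@(x,\<not>ov)#V" using decomp_exists[OF f t] by blast
  have xc: "x \<noteq> c" "x \<noteq> d" using x cd by auto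
  have nc: "(c,bb) \<notin> set U \<and> (c,bb) \<notin> set Xs \<and> (c,bb) \<notin> set V \<and> (d,bb) \<notin> set U \<and> (d,bb) \<notin> set Xs \<and> (d,bb) \<notin> set V" for bb
    using cd unfolding crD L by force
  have nc': "\<forall>p\<in>set U \<union> set Xs \<union> set V. fst p \<noteq> c \<and> fst p \<noteq> d"
    using cd(2,3) unfolding crD L by force
  have "u@v = U@(x,ov)#Xs@(x,\<not>ov)#V" using r L by simp
  from ins_decomp[OF this, of E2] xc E2 obtain U1 Xs1 V1 where
    L1: "u@E2@v = U1@(x,ov)#Xs1@(x,\<not>ov)#V1" and
    s1: "(set V1 \<union> set U1 = set V \<union> set U \<union> set E2 \<and> set Xs1 = set Xs) \<or>
      (set V1 \<union> set U1 = set V \<union> set U \<and> set Xs1 = set Xs \<union> set E2)" by auto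
  have "[]@(u@E2@v) = U1@(x,ov)#Xs1@(x,\<not>ov)#V1" using L1 by simp
  from ins_decomp[OF this, of "[(c,True),(d,True)]"] xc obtain U2 Xs2 V2 where
    L2: "[(c,True),(d,True)]@u@E2@v = U2@(x,ov)#Xs2@(x,\<not>ov)#V2" and
    s2: "(set V2 \<union> set U2 = set V1 \<union> set U1 \<union> {(c,True),(d,True)} \<and> set Xs2 = set Xs1) \<or>
      (set V2 \<union> set U2 = set V1 \<union> set U1 \<and> set Xs2 = set Xs1 \<union> {(c,True),(d,True)})" by auto
  have l1: "lk_smooth D x = LKs (if ov then set V \<union> set U else set Xs) (if ov then set Xs else set V \<union> set U) (snd D)"
    by (rule lk_decomp[OF dD L])
  have "rotate n (fst D') = U2@(x,ov)#Xs2@(x,\<not>ov)#V2" using r' L2 by simp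
  then have l2: "lk_smooth D' x = LKs (if ov then set V2 \<union> set U2 else set Xs2) (if ov then set Xs2 else set V2 \<union> set U2) (snd D')"
    by (rule lk_decomp[OF dD'])
  have "LKs (if ov then set V2 \<union> set U2 else set Xs2) (if ov then set Xs2 else set V2 \<union> set U2) (snd D')
      = LKs (if ov then set V \<union> set U else set Xs) (if ov then set Xs else set V \<union> set U) (snd D')"
  proof -
    have "\<exists>b1 b2. set V2 \<union> set U2 = set V \<union> set U \<union> (if b1 then set E2 else {}) \<union> (if b2 then {(c,True),(d,True)} else {})
       \<and> set Xs2 = set Xs \<union> (if b1 then {} else set E2) \<union> (if b2 then {} else {(c,True),(d,True)})"
    proof -
      from s1 show ?thesis
      proof
        assume a1: "set V1 \<union> set U1 = set V \<union> set U \<union> set E2 \<and> set Xs1 = set Xs"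
        from s2 show ?thesis
        proof
          assume "set V2 \<union> set U2 = set V1 \<union> set U1 \<union> {(c,True),(d,True)} \<and> set Xs2 = set Xs1"
          then show ?thesis using a1 by (intro exI[of _ True] exI[of _ True]) simp
        next
          assume "set V2 \<union> set U2 = set V1 \<union> set U1 \<and> set Xs2 = set Xs1 \<union> {(c,True),(d,True)}"
          then show ?thesis using a1 by (intro exI[of _ True] exI[of _ False]) simp
        qed
      next
        assume a1: "set V1 \<union> set U1 = set V \<union> set U \<and> set Xs1 = set Xs \<union> set E2"
        from s2 show ?thesis
        proof
          assume "set V2 \<union> set U2 = set V1 \<union> set U1 \<union> {(c,True),(d,True)} \<and> set Xs2 = set Xs1"
          then show ?thesis using a1 by (intro exI[of _ False] exI[of _ True]) simp
        next
          assume "set V2 \<union> set U2 = set V1 \<union> set U1 \<and> set Xs2 = set Xs1 \<union> {(c,True),(d,True)}"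
          then show ?thesis using a1 by (intro exI[of _ False] exI[of _ False]) simp
        qed
      qed
    qed
    then obtain b1 b2 where O2: "set V2 \<union> set U2 = set V \<union> set U \<union> (if b1 then {(c,False),(d,False)} else {}) \<union> (if b2 then {(c,True),(d,True)} else {})"
       and I2: "set Xs2 = set Xs \<union> (if b1 then {} else {(c,False),(d,False)}) \<union> (if b2 then {} else {(c,True),(d,True)})"
      unfolding E2 by blast
    have r1: "{p \<in> set V \<union> set U \<union> B1 \<union> B2. fst p \<notin> {c,d}} = set V \<union> set U"
      if "B1 \<subseteq> {(c,False),(d,False)}" "B2 \<subseteq> {(c,True),(d,True)}" for B1 B2
      using that nc by force
    have r2: "{p \<in> set Xs \<union> B1 \<union> B2. fst p \<notin> {c,d}} = set Xs"
      if "B1 \<subseteq> {(c,False),(d,False)}" "B2 \<subseteq> {(c,True),(d,True)}" for B1 B2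
      using that nc by force
    show ?thesis unfolding O2 I2
      apply (rule LKs_pair[OF cd(1) sg])
      subgoal by simp
      subgoal using nc' by (cases ov) auto
      subgoal using nc' by (cases ov) auto
      subgoal using cd(1) nc by (cases ov; cases b1; cases b2) simp_all
      subgoal using cd(1) nc by (cases ov; cases b1; cases b2) simp_all
      done
  qed
  also have "\<dots> = LKs (if ov then set V \<union> set U else set Xs) (if ov then set Xs else set V \<union> set U) (snd D)"
  proof (rule LKs_cong)
    fix y assume "(y, True) \<in> (if ov then set V \<union> set U else set Xs)"
    then have "y \<in> crossings D" unfolding crD L by (force split: if_splits)
    then show "snd D' y = snd D y" using ag by (simp add: agree_on_old_def)
  qed simp
  finally show ?thesis using l1 l2 by simp
qed




lemma LKs_K:
  assumes "finite S0" "finite A" "finite K"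
    "\<forall>p\<in>S0 \<union> T0. fst p \<notin> K" "\<forall>p\<in>A \<union> B. fst p \<in> K"
  shows "LKs (S0 \<union> A) (T0 \<union> B) s = LKs S0 T0 s + (\<Sum>y\<in>K. if (y,True)\<in>A \<and> (y,False)\<in>B then s y else 0)"
proof -
  have "LKs (S0 \<union> A) (T0 \<union> B) s = LKs {p\<in>S0 \<union> A. fst p \<notin> K} {p\<in>T0 \<union> B. fst p \<notin> K} s
     + (\<Sum>y\<in>K. if (y,True)\<in>S0 \<union> A \<and> (y,False)\<in>T0 \<union> B then s y else 0)"
    using assms by (intro LKs_split) auto
  moreover have "{p\<in>S0 \<union> A. fst p \<notin> K} = S0" "{p\<in>T0 \<union> B. fst p \<notin> K} = T0" using assms(4,5) by auto
  moreover have "(\<Sum>y\<in>K. if (y,True)\<in>S0 \<union> A \<and> (y,False)\<in>T0 \<union> B then s y else 0)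
      = (\<Sum>y\<in>K. if (y,True)\<in>A \<and> (y,False)\<in>B then s y else 0)"
  proof (rule sum.cong)
    fix y assume "y \<in> K"
    then have "(y,b) \<notin> S0" "(y,b) \<notin> T0" for b using assms(4) by force+
    then show "(if (y,True)\<in>S0 \<union> A \<and> (y,False)\<in>T0 \<union> B then s y else 0) = (if (y,True)\<in>A \<and> (y,False)\<in>B then s y else 0)"
      by auto
  qed simp
  ultimately show ?thesis by simp
qed

lemma RII_common:
  assumes kd: "knot_diagram D" and kd': "knot_diagram D'" and cd: "c \<noteq> d" "c \<notin> crossings D" "d \<notin> crossings D"
    and r: "rotate m (fst D) = u@v" and r': "rotate n (fst D') = (c,True)#(d,True)#u@E2@v"
    and E2: "set E2 = {(c,False),(d,False)}" and sg: "snd D' d = - snd D' c" and ag: "agree_on_old D D'"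
  shows "H D' = H D - (snd D' c * lk_smooth D' c + snd D' d * lk_smooth D' d)"
    and "\<forall>p\<in>set u \<union> set v. fst p \<noteq> c \<and> fst p \<noteq> d"
proof -
  have crD: "crossings D = fst ` set (u@v)" using crossings_rot[of D m] r by simp
  have crD': "crossings D' = insert c (insert d (crossings D))"
    using crossings_rot[of D' n] r' crD E2 by auto
  have old: "\<forall>x\<in>crossings D. lk_smooth D' x = lk_smooth D x"
    using RII_old[OF kd kd' cd r r' E2 sg ag] by blast
  have "H D' = - (\<Sum>a\<in>insert c (insert d (crossings D)). snd D' a * lk_smooth D' a)"
    using H_formula[OF kd_signs[OF kd']] crD' by simp
  also have "\<dots> = - (snd D' c * lk_smooth D' c + snd D' d * lk_smooth D' d + (\<Sum>a\<in>crossings D. snd D' a * lk_smooth D' a))"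
    using cd by (simp add: finite_crossings)
  also have "(\<Sum>a\<in>crossings D. snd D' a * lk_smooth D' a) = (\<Sum>a\<in>crossings D. snd D a * lk_smooth D a)"
    using old ag by (simp add: agree_on_old_def)
  finally have e: "H D' = - (snd D' c * lk_smooth D' c + snd D' d * lk_smooth D' d + (\<Sum>a\<in>crossings D. snd D a * lk_smooth D a))" .
  have "- (\<Sum>a\<in>crossings D. snd D a * lk_smooth D a) = H D" using H_formula[OF kd_signs[OF kd]] by simp
  with e show "H D' = H D - (snd D' c * lk_smooth D' c + snd D' d * lk_smooth D' d)" by simp
  show "\<forall>p\<in>set u \<union> set v. fst p \<noteq> c \<and> fst p \<noteq> d" using cd crD by force
qed

lemma RII_matched_case:
  assumes kd: "knot_diagram D" and kd': "knot_diagram D'" and mv: "RII_matched_move D D'"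
  shows "H D' = H D + 1"
proof -
  obtain m n c d u v where cd: "c \<noteq> d" "c \<notin> crossings D" "d \<notin> crossings D"
    and r: "rotate m (fst D) = u@v" and r': "rotate n (fst D') = (c, True) # (d, True) # u @ [(c, False), (d, False)] @ v"
    and sg: "snd D' d = - snd D' c" and ag: "agree_on_old D D'"
    using mv unfolding RII_matched_move_def by blast
  have E2: "set [(c, False), (d, False)] = {(c,False),(d,False)}" by simp
  note C = RII_common[OF kd kd' cd r r' E2 sg ag]
  have dD': "distinct (fst D')" using kd' by (auto simp: knot_diagram_def)
  have "rotate n (fst D') = []@(c,True)#((d,True)#u)@(c,\<not>True)#((d,False)#v)" using r' by simp
  from lk_decomp[OF dD' this] have lc: "lk_smooth D' c = LKs (set v \<union> {(d,False)}) (set u \<union> {(d,True)}) (snd D')"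
    by (simp add: Un_commute)
  have "rotate n (fst D') = [(c,True)]@(d,True)#(u@[(c,False)])@(d,\<not>True)#v" using r' by simp
  from lk_decomp[OF dD' this] have ld: "lk_smooth D' d = LKs (set v \<union> {(c,True)}) (set u \<union> {(c,False)}) (snd D')"
    by simp
  have lc2: "lk_smooth D' c = LKs (set v) (set u) (snd D')"
    unfolding lc using C(2) cd(1) by (subst LKs_K[where K="{c,d}"]) auto
  have ld2: "lk_smooth D' d = LKs (set v) (set u) (snd D') + snd D' c"
    unfolding ld using C(2) cd(1) by (subst LKs_K[where K="{c,d}"]) auto
  have "snd D' c \<in> {1,-1}"
  proof -
    have "c \<in> crossings D'" using crossings_rot[of D' n] r' by force
    then show ?thesis using kd_signs[OF kd'] by blast
  qed
  then have "snd D' c * snd D' c = 1" by auto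
  then show ?thesis using C(1) lc2 ld2 sg by (simp add: algebra_simps)
qed

lemma RII_unmatched_case:
  assumes kd: "knot_diagram D" and kd': "knot_diagram D'" and mv: "RII_unmatched_move D D'"
  shows "H D' = H D"
proof -
  obtain m n c d u v where cd: "c \<noteq> d" "c \<notin> crossings D" "d \<notin> crossings D"
    and r: "rotate m (fst D) = u@v" and r': "rotate n (fst D') = (c, True) # (d, True) # u @ [(d, False), (c, False)] @ v"
    and sg: "snd D' d = - snd D' c" and ag: "agree_on_old D D'"
    using mv unfolding RII_unmatched_move_def by blast
  have E2: "set [(d, False), (c, False)] = {(c,False),(d,False)}" by auto
  note C = RII_common[OF kd kd' cd r r' E2 sg ag]
  have dD': "distinct (fst D')" using kd' by (auto simp: knot_diagram_def)
  have "rotate n (fst D') = []@(c,True)#((d,True)#u@[(d,False)])@(c,\<not>True)#v" using r' by simp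
  from lk_decomp[OF dD' this] have lc: "lk_smooth D' c = LKs (set v \<union> {}) (set u \<union> {(d,True),(d,False)}) (snd D')"
    by (simp add: Un_commute insert_commute)
  have "rotate n (fst D') = [(c,True)]@(d,True)#u@(d,\<not>True)#((c,False)#v)" using r' by simp
  from lk_decomp[OF dD' this] have ld: "lk_smooth D' d = LKs (set v \<union> {(c,False),(c,True)}) (set u \<union> {}) (snd D')"
    by (simp add: Un_commute insert_commute)
  have lc2: "lk_smooth D' c = LKs (set v) (set u) (snd D')"
    unfolding lc using C(2) cd(1) by (subst LKs_K[where K="{c,d}"]) auto
  have ld2: "lk_smooth D' d = LKs (set v) (set u) (snd D')"
    unfolding ld using C(2) cd(1) by (subst LKs_K[where K="{c,d}"]) auto
  show ?thesis using C(1) lc2 ld2 sg by (simp add: algebra_simps)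
qed




lemma swap_decomp:
  assumes "P@Q@R = U@(x,ov)#Xs@(x,\<not>ov)#V" "(x,True)\<notin>set Q" "(x,False)\<notin>set Q" "set Q' = set Q"
  shows "\<exists>U' Xs' V'. P@Q'@R = U'@(x,ov)#Xs'@(x,\<not>ov)#V' \<and> set V' \<union> set U' = set V \<union> set U \<and> set Xs' = set Xs"
proof -
  from block_loc[OF assms(1)[symmetric] assms(2,3)] show ?thesis
  proof (elim disjE exE conjE)
    fix W assume h: "U = P @ Q @ W" "R = W @ (x, ov) # Xs @ (x, \<not> ov) # V"
    have "P@Q'@R = (P@Q'@W)@(x,ov)#Xs@(x,\<not>ov)#V \<and> set V \<union> set (P@Q'@W) = set V \<union> set U \<and> set Xs = set Xs"
      using h assms(4) by simp
    then show ?thesis by blast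
  next
    fix W1 W2 assume h: "Xs = W1 @ Q @ W2" "P = U @ (x, ov) # W1" "R = W2 @ (x, \<not> ov) # V"
    have "P@Q'@R = U@(x,ov)#(W1@Q'@W2)@(x,\<not>ov)#V \<and> set V \<union> set U = set V \<union> set U \<and> set (W1@Q'@W2) = set Xs"
      using h assms(4) by simp
    then show ?thesis by blast
  next
    fix W assume h: "P = U @ (x, ov) # Xs @ (x, \<not> ov) # W" "V = W @ Q @ R"
    have "P@Q'@R = U@(x,ov)#Xs@(x,\<not>ov)#(W@Q'@R) \<and> set (W@Q'@R) \<union> set U = set V \<union> set U \<and> set Xs = set Xs"
      using h assms(4) by simp
    then show ?thesis by blast
  qed
qed

lemma LKs_ifK:
  assumes "finite O0" "finite I0" "finite E1" "finite E2" "finite K"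
    "\<forall>p\<in>O0\<union>I0. fst p\<notin>K" "\<forall>p\<in>E1\<union>E2. fst p\<in>K"
  shows "LKs (if ov then O0 \<union> E1 else I0 \<union> E2) (if ov then I0 \<union> E2 else O0 \<union> E1) s
     = LKs (if ov then O0 else I0) (if ov then I0 else O0) s
       + (\<Sum>z\<in>K. if (if ov then (z,True)\<in>E1 \<and> (z,False)\<in>E2 else (z,True)\<in>E2 \<and> (z,False)\<in>E1) then s z else 0)"
proof (cases ov)
  case True
  then show ?thesis using LKs_K[of O0 E1 K I0 E2 s] assms by auto
next
  case False
  then show ?thesis using LKs_K[of I0 E2 K O0 E1 s] assms by auto
qed

lemma P_sets:
  "set (P1 a b c h1 h2 h3 f) = {(c, h1 > h3), (a, h1 > h2)}"
  "set (P2 a b c h1 h2 h3 f) = {(a, h2 > h1), (b, h2 > h3)}"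
  "set (P3 a b c h1 h2 h3 f) = {(b, h3 > h2), (c, h3 > h1)}"
  by (auto simp: P1_def P2_def P3_def)

lemma decomp_a:
  assumes "h1 \<noteq> (h2::nat)"
  shows "P1 a b c h1 h2 h3 f1 @ A @ P2 a b c h1 h2 h3 f2 @ B @ P3 a b c h1 h2 h3 f3 @ C
   = (if f1 then [(c,h1>h3)] else []) @ (a, h1>h2) #
     ((if f1 then [] else [(c,h1>h3)]) @ A @ (if f2 then [] else [(b,h2>h3)])) @ (a, \<not>(h1>h2)) #
     ((if f2 then [(b,h2>h3)] else []) @ B @ P3 a b c h1 h2 h3 f3 @ C)"
proof -
  have "(h2 > h1) = (\<not> h1 > h2)" using assms by auto
  then show ?thesis by (cases f1; cases f2) (simp_all add: P1_def P2_def)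
qed

lemma decomp_b:
  assumes "h2 \<noteq> (h3::nat)"
  shows "P1 a b c h1 h2 h3 f1 @ A @ P2 a b c h1 h2 h3 f2 @ B @ P3 a b c h1 h2 h3 f3 @ C
   = (P1 a b c h1 h2 h3 f1 @ A @ (if f2 then [(a,h2>h1)] else [])) @ (b, h2>h3) #
     ((if f2 then [] else [(a,h2>h1)]) @ B @ (if f3 then [] else [(c,h3>h1)])) @ (b, \<not>(h2>h3)) #
     ((if f3 then [(c,h3>h1)] else []) @ C)"
proof -
  have "(h3 > h2) = (\<not> h2 > h3)" using assms by auto
  then show ?thesis by (cases f2; cases f3) (simp_all add: P2_def P3_def)
qed

lemma decomp_c:
  assumes "h1 \<noteq> (h3::nat)"
  shows "P1 a b c h1 h2 h3 f1 @ A @ P2 a b c h1 h2 h3 f2 @ B @ P3 a b c h1 h2 h3 f3 @ C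
   = (if f1 then [] else [(a,h1>h2)]) @ (c, h1>h3) #
     ((if f1 then [(a,h1>h2)] else []) @ A @ P2 a b c h1 h2 h3 f2 @ B @ (if f3 then [(b,h3>h2)] else [])) @ (c, \<not>(h1>h3)) #
     ((if f3 then [] else [(b,h3>h2)]) @ C)"
proof -
  have "(h3 > h1) = (\<not> h1 > h3)" using assms by auto
  then show ?thesis by (cases f1; cases f3) (simp_all add: P1_def P3_def)
qed




definition EXs :: "bool \<Rightarrow> ('c\<times>bool) set \<Rightarrow> ('c\<times>bool) set \<Rightarrow> 'c set \<Rightarrow> ('c\<Rightarrow>int) \<Rightarrow> int" where
  "EXs ov E1 E2 K s = (\<Sum>z\<in>K. if (if ov then (z,True)\<in>E1 \<and> (z,False)\<in>E2 else (z,True)\<in>E2 \<and> (z,False)\<in>E1) then s z else 0)"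

definition "Ea1 a b c h1 h2 h3 f1 f2 f3 = set (if f2 then [(b,h2>h3)] else []) \<union> set (P3 a b c h1 h2 h3 f3) \<union> set (if f1 then [(c,(h1::nat)>h3)] else [])"
definition "Ea2 a b c h1 h2 h3 f1 f2 (f3::bool) = set (if f1 then [] else [(c,(h1::nat)>h3)]) \<union> set (if f2 then [] else [(b,h2>h3)])"
definition "Eb1 a b c h1 h2 h3 f1 f2 f3 = set (if f3 then [(c,h3>h1)] else []) \<union> set (P1 a b c h1 h2 h3 f1) \<union> set (if f2 then [(a,(h2::nat)>h1)] else [])"
definition "Eb2 a b c h1 h2 h3 (f1::bool) f2 f3 = set (if f2 then [] else [(a,(h2::nat)>h1)]) \<union> set (if f3 then [] else [(c,h3>h1)])"
definition "Ec1 a b c h1 h2 h3 f1 (f2::bool) f3 = set (if f3 then [] else [(b,h3>h2)]) \<union> set (if f1 then [] else [(a,(h1::nat)>h2)])"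
definition "Ec2 a b c h1 h2 h3 f1 f2 f3 = set (if f1 then [(a,(h1::nat)>h2)] else []) \<union> set (P2 a b c h1 h2 h3 f2) \<union> set (if f3 then [(b,h3>h2)] else [])"

lemma card_q: "card {k \<in> {1::nat, 2, 3}. \<not> [f1, f2, f3] ! (k - 1)} = (if f1 then 0 else 1) + (if f2 then 0 else 1) + (if f3 then 0 else (1::nat))"
proof -
  have e: "{k \<in> {1::nat, 2, 3}. \<not> [f1, f2, f3] ! (k - 1)} = (if f1 then {} else {1}) \<union> (if f2 then {} else {2}) \<union> (if f3 then {} else {3})"
    by auto
  show ?thesis unfolding e by (cases f1; cases f2; cases f3) auto
qed

lemma final_arith:
  fixes a b c :: 'c and h1 h2 h3 :: nat and s :: "'c \<Rightarrow> int"
  assumes d: "distinct [a,b,c]" "distinct [h1,h2,h3]" and mu: "mu \<in> {1,-1}"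
    and sa: "s a = mu * dlt f1 * dlt f2 * psgn h1 h2"
    and sb: "s b = mu * dlt f2 * dlt f3 * psgn h2 h3"
    and sc: "s c = mu * dlt f3 * dlt f1 * psgn h3 h1"
  defines "K \<equiv> {a,b,c}"
  defines "\<Delta> \<equiv> - (s a * (EXs (h1>h2) (Ea1 a b c h1 h2 h3 (\<not>f1) (\<not>f2) (\<not>f3)) (Ea2 a b c h1 h2 h3 (\<not>f1) (\<not>f2) (\<not>f3)) K s
                         - EXs (h1>h2) (Ea1 a b c h1 h2 h3 f1 f2 f3) (Ea2 a b c h1 h2 h3 f1 f2 f3) K s)
                 + s b * (EXs (h2>h3) (Eb1 a b c h1 h2 h3 (\<not>f1) (\<not>f2) (\<not>f3)) (Eb2 a b c h1 h2 h3 (\<not>f1) (\<not>f2) (\<not>f3)) K s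
                         - EXs (h2>h3) (Eb1 a b c h1 h2 h3 f1 f2 f3) (Eb2 a b c h1 h2 h3 f1 f2 f3) K s)
                 + s c * (EXs (h1>h3) (Ec1 a b c h1 h2 h3 (\<not>f1) (\<not>f2) (\<not>f3)) (Ec2 a b c h1 h2 h3 (\<not>f1) (\<not>f2) (\<not>f3)) K s
                         - EXs (h1>h3) (Ec1 a b c h1 h2 h3 f1 f2 f3) (Ec2 a b c h1 h2 h3 f1 f2 f3) K s))"
  shows "\<Delta> \<in> {1,-1} \<and> \<Delta> = (-1) ^ card {k \<in> {1::nat, 2, 3}. \<not> [f1, f2, f3] ! (k - 1)}"
proof -
  have ab: "a \<noteq> b" "a \<noteq> c" "b \<noteq> c" "b \<noteq> a" "c \<noteq> a" "c \<noteq> b" using d by auto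
  have EX: "EXs ov E1 E2 K s = (if (if ov then (a,True)\<in>E1 \<and> (a,False)\<in>E2 else (a,True)\<in>E2 \<and> (a,False)\<in>E1) then s a else 0)
     + (if (if ov then (b,True)\<in>E1 \<and> (b,False)\<in>E2 else (b,True)\<in>E2 \<and> (b,False)\<in>E1) then s b else 0)
     + (if (if ov then (c,True)\<in>E1 \<and> (c,False)\<in>E2 else (c,True)\<in>E2 \<and> (c,False)\<in>E1) then s c else 0)" for ov E1 E2
    unfolding EXs_def K_def using ab by simp
  have h: "h1 \<noteq> h2" "h1 \<noteq> h3" "h2 \<noteq> h3" using d by auto
  have "mu = 1 \<or> mu = -1" using mu by auto
  then show ?thesis
    unfolding \<Delta>_def EX card_q sa sb sc
    using h ab
    by (elim disjE; cases f1; cases f2; cases f3; cases "h1 < h2"; cases "h2 < h3"; cases "h1 < h3")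
       (simp_all add: Ea1_def Ea2_def Eb1_def Eb2_def Ec1_def Ec2_def P1_def P2_def P3_def dlt_def psgn_def)
qed




lemma lk_abc_gen:
  assumes dD: "distinct (fst D)" and r: "rotate m (fst D) = U@(y,ov)#Xs@(y,\<not>ov)#V"
    and O: "set V \<union> set U = O0 \<union> E1" and I: "set Xs = I0 \<union> E2"
    and fK: "finite K" and k1: "\<forall>p\<in>O0 \<union> I0. fst p \<notin> K" and k2: "\<forall>p\<in>E1\<union>E2. fst p \<in> K"
  shows "lk_smooth D y = LKs (if ov then O0 else I0) (if ov then I0 else O0) (snd D) + EXs ov E1 E2 K (snd D)"
proof -
  have "finite (O0 \<union> E1)" unfolding O[symmetric] by simp
  then have f: "finite O0" "finite E1" by auto
  have "finite (I0 \<union> E2)" unfolding I[symmetric] by simp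
  then have g: "finite I0" "finite E2" by auto
  show ?thesis
    unfolding lk_decomp[OF dD r] O I EXs_def
    by (rule LKs_ifK[OF f(1) g(1) f(2) g(2) fK k1 k2])
qed

lemma lk_a_form:
  assumes dD: "distinct (fst D)"
    and r: "rotate m (fst D) = P1 a b c h1 h2 h3 f1 @ A @ P2 a b c h1 h2 h3 f2 @ B @ P3 a b c h1 h2 h3 f3 @ C"
    and d: "distinct [a,b,c]" "distinct [h1,h2,h3]" and kf: "\<forall>p\<in>set A \<union> set B \<union> set C. fst p \<notin> {a,b,c}"
  shows "lk_smooth D a = LKs (if h1>h2 then set B \<union> set C else set A) (if h1>h2 then set A else set B \<union> set C) (snd D)
     + EXs (h1>h2) (Ea1 a b c h1 h2 h3 f1 f2 f3) (Ea2 a b c h1 h2 h3 f1 f2 f3) {a,b,c} (snd D)"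
proof -
  have h: "h1 \<noteq> h2" using d by auto
  show ?thesis
  proof (rule lk_abc_gen[OF dD r[unfolded decomp_a[OF h]]])
    show "set ((if f2 then [(b, h2 > h3)] else []) @ B @ P3 a b c h1 h2 h3 f3 @ C) \<union> set (if f1 then [(c, h1 > h3)] else [])
      = (set B \<union> set C) \<union> Ea1 a b c h1 h2 h3 f1 f2 f3" unfolding Ea1_def by (cases f1; cases f2; cases f3; simp; blast)
    show "set ((if f1 then [] else [(c, h1 > h3)]) @ A @ (if f2 then [] else [(b, h2 > h3)])) = set A \<union> Ea2 a b c h1 h2 h3 f1 f2 f3"
      unfolding Ea2_def by (cases f1; cases f2; cases f3; simp; blast)
    show "\<forall>p\<in>Ea1 a b c h1 h2 h3 f1 f2 f3 \<union> Ea2 a b c h1 h2 h3 f1 f2 f3. fst p \<in> {a, b, c}"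
      unfolding Ea1_def Ea2_def P3_def by (cases f1; cases f2; cases f3) auto
    show "finite {a,b,c}" by simp
    show "\<forall>p\<in>(set B \<union> set C) \<union> set A. fst p \<notin> {a,b,c}" using kf by blast
  qed
qed

lemma lk_b_form:
  assumes dD: "distinct (fst D)"
    and r: "rotate m (fst D) = P1 a b c h1 h2 h3 f1 @ A @ P2 a b c h1 h2 h3 f2 @ B @ P3 a b c h1 h2 h3 f3 @ C"
    and d: "distinct [a,b,c]" "distinct [h1,h2,h3]" and kf: "\<forall>p\<in>set A \<union> set B \<union> set C. fst p \<notin> {a,b,c}"
  shows "lk_smooth D b = LKs (if h2>h3 then set C \<union> set A else set B) (if h2>h3 then set B else set C \<union> set A) (snd D)
     + EXs (h2>h3) (Eb1 a b c h1 h2 h3 f1 f2 f3) (Eb2 a b c h1 h2 h3 f1 f2 f3) {a,b,c} (snd D)"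
proof -
  have h: "h2 \<noteq> h3" using d by auto
  show ?thesis
  proof (rule lk_abc_gen[OF dD r[unfolded decomp_b[OF h]]])
    show "set ((if f3 then [(c, h3 > h1)] else []) @ C) \<union> set (P1 a b c h1 h2 h3 f1 @ A @ (if f2 then [(a, h2 > h1)] else []))
      = (set C \<union> set A) \<union> Eb1 a b c h1 h2 h3 f1 f2 f3" unfolding Eb1_def by (cases f1; cases f2; cases f3; simp; blast)
    show "set ((if f2 then [] else [(a, h2 > h1)]) @ B @ (if f3 then [] else [(c, h3 > h1)])) = set B \<union> Eb2 a b c h1 h2 h3 f1 f2 f3"
      unfolding Eb2_def by (cases f1; cases f2; cases f3; simp; blast)
    show "\<forall>p\<in>Eb1 a b c h1 h2 h3 f1 f2 f3 \<union> Eb2 a b c h1 h2 h3 f1 f2 f3. fst p \<in> {a, b, c}"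
      unfolding Eb1_def Eb2_def P1_def by (cases f1; cases f2; cases f3) auto
    show "finite {a,b,c}" by simp
    show "\<forall>p\<in>(set C \<union> set A) \<union> set B. fst p \<notin> {a,b,c}" using kf by blast
  qed
qed

lemma lk_c_form:
  assumes dD: "distinct (fst D)"
    and r: "rotate m (fst D) = P1 a b c h1 h2 h3 f1 @ A @ P2 a b c h1 h2 h3 f2 @ B @ P3 a b c h1 h2 h3 f3 @ C"
    and d: "distinct [a,b,c]" "distinct [h1,h2,h3]" and kf: "\<forall>p\<in>set A \<union> set B \<union> set C. fst p \<notin> {a,b,c}"
  shows "lk_smooth D c = LKs (if h1>h3 then set C else set A \<union> set B) (if h1>h3 then set A \<union> set B else set C) (snd D)
     + EXs (h1>h3) (Ec1 a b c h1 h2 h3 f1 f2 f3) (Ec2 a b c h1 h2 h3 f1 f2 f3) {a,b,c} (snd D)"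
proof -
  have h: "h1 \<noteq> h3" using d by auto
  show ?thesis
  proof (rule lk_abc_gen[OF dD r[unfolded decomp_c[OF h]]])
    show "set ((if f3 then [] else [(b, h3 > h2)]) @ C) \<union> set (if f1 then [] else [(a, h1 > h2)])
      = set C \<union> Ec1 a b c h1 h2 h3 f1 f2 f3" unfolding Ec1_def by (cases f1; cases f2; cases f3; simp; blast)
    show "set ((if f1 then [(a, h1 > h2)] else []) @ A @ P2 a b c h1 h2 h3 f2 @ B @ (if f3 then [(b, h3 > h2)] else []))
      = (set A \<union> set B) \<union> Ec2 a b c h1 h2 h3 f1 f2 f3"
      unfolding Ec2_def by (cases f1; cases f2; cases f3; simp; blast)
    show "\<forall>p\<in>Ec1 a b c h1 h2 h3 f1 f2 f3 \<union> Ec2 a b c h1 h2 h3 f1 f2 f3. fst p \<in> {a, b, c}"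
      unfolding Ec1_def Ec2_def P2_def by (cases f1; cases f2; cases f3) auto
    show "finite {a,b,c}" by simp
    show "\<forall>p\<in>set C \<union> (set A \<union> set B). fst p \<notin> {a,b,c}" using kf by blast
  qed
qed




lemma RIII_case:
  assumes kd: "knot_diagram D" and kd': "knot_diagram D'" and mv: "RIII_move D D' q"
  shows "H D' - H D \<in> {1, -1} \<and> H D' - H D = St_change q"
proof -
  obtain m n a b c h1 h2 h3 f1 f2 f3 A B C mu where
    dabc: "distinct [a, b, c]" and dh: "distinct [h1, h2, h3]" and
    r: "rotate m (fst D) = P1 a b c h1 h2 h3 f1 @ A @ P2 a b c h1 h2 h3 f2 @ B @ P3 a b c h1 h2 h3 f3 @ C" and
    r': "rotate n (fst D') = P1 a b c h1 h2 h3 (\<not> f1) @ A @ P2 a b c h1 h2 h3 (\<not> f2) @ B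
                           @ P3 a b c h1 h2 h3 (\<not> f3) @ C" and
    mu: "mu \<in> {1, -1}" and
    sa: "snd D a = mu * dlt f1 * dlt f2 * psgn h1 h2" and
    sb: "snd D b = mu * dlt f2 * dlt f3 * psgn h2 h3" and
    sc: "snd D c = mu * dlt f3 * dlt f1 * psgn h3 h1" and
    ag: "agree_on_old D D'" and
    qd: "q = card {k \<in> {1::nat, 2, 3}. \<not> [f1, f2, f3] ! (k - 1)}"
    using mv unfolding RIII_move_def by blast
  let ?p1 = "P1 a b c h1 h2 h3" and ?p2 = "P2 a b c h1 h2 h3" and ?p3 = "P3 a b c h1 h2 h3"
  let ?L = "rotate m (fst D)"
  have dD: "distinct (fst D)" and dD': "distinct (fst D')" using kd kd' by (auto simp: knot_diagram_def)
  have dL: "distinct (?p1 f1 @ A @ ?p2 f2 @ B @ ?p3 f3 @ C)" using dD r by (metis distinct_rotate)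
  have hne: "h1 \<noteq> h2" "h1 \<noteq> h3" "h2 \<noteq> h3" using dh by auto
  have PS: "p \<in> set (?p1 f1) \<union> set (?p2 f2) \<union> set (?p3 f3)" if "fst p \<in> {a,b,c}" for p
  proof -
    obtain y t where p: "p = (y,t)" by fastforce
    show ?thesis using that hne unfolding p P_sets by (cases t) auto
  qed
  have kf: "\<forall>p\<in>set A \<union> set B \<union> set C. fst p \<notin> {a,b,c}"
  proof
    fix p assume p: "p \<in> set A \<union> set B \<union> set C"
    show "fst p \<notin> {a,b,c}"
    proof
      assume "fst p \<in> {a,b,c}"
      then have "p \<in> set (?p1 f1) \<union> set (?p2 f2) \<union> set (?p3 f3)" by (rule PS)
      then show False using p dL by auto
    qed
  qed
  have crD: "crossings D = fst ` set (?p1 f1 @ A @ ?p2 f2 @ B @ ?p3 f3 @ C)"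
    using crossings_rot[of D m] r by simp
  have crD': "crossings D' = crossings D"
    using crossings_rot[of D' n] r' crD by (simp add: P_sets)
  have abc: "a \<in> crossings D" "b \<in> crossings D" "c \<in> crossings D"
    unfolding crD by (force simp: P_sets)+
  have sg: "snd D' y = snd D y" if "y \<in> crossings D" for y
    using ag that by (simp add: agree_on_old_def)
  have old: "lk_smooth D' x = lk_smooth D x" if x: "x \<in> crossings D" "x \<notin> {a,b,c}" for x
  proof -
    have t: "(x,True) \<in> set ?L" and f: "(x,False) \<in> set ?L" using kd_pass[OF kd x(1)] by auto
    obtain U ov Xs V where L: "?L = U@(x,ov)#Xs@(x,\<not>ov)#V" using decomp_exists[OF f t] by blast
    have n1: "(x,bb) \<notin> set (?p1 g)" and n2: "(x,bb) \<notin> set (?p2 g)" and n3: "(x,bb) \<notin> set (?p3 g)" for bb g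
      using x(2) unfolding P_sets by auto
    have ps: "set (?p1 (\<not>f1)) = set (?p1 f1)" "set (?p2 (\<not>f2)) = set (?p2 f2)" "set (?p3 (\<not>f3)) = set (?p3 f3)"
      by (simp_all add: P_sets)
    have "[] @ ?p1 f1 @ (A @ ?p2 f2 @ B @ ?p3 f3 @ C) = U@(x,ov)#Xs@(x,\<not>ov)#V" using r L by simp
    from swap_decomp[OF this n1[of True f1] n1[of False f1] ps(1)] obtain U1 Xs1 V1 where
      L1: "[] @ ?p1 (\<not>f1) @ (A @ ?p2 f2 @ B @ ?p3 f3 @ C) = U1@(x,ov)#Xs1@(x,\<not>ov)#V1"
      and s1: "set V1 \<union> set U1 = set V \<union> set U" "set Xs1 = set Xs" by blast
    have "(?p1 (\<not>f1) @ A) @ ?p2 f2 @ (B @ ?p3 f3 @ C) = U1@(x,ov)#Xs1@(x,\<not>ov)#V1" using L1 by simp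
    from swap_decomp[OF this n2[of True f2] n2[of False f2] ps(2)] obtain U2 Xs2 V2 where
      L2: "(?p1 (\<not>f1) @ A) @ ?p2 (\<not>f2) @ (B @ ?p3 f3 @ C) = U2@(x,ov)#Xs2@(x,\<not>ov)#V2"
      and s2: "set V2 \<union> set U2 = set V1 \<union> set U1" "set Xs2 = set Xs1" by blast
    have "(?p1 (\<not>f1) @ A @ ?p2 (\<not>f2) @ B) @ ?p3 f3 @ C = U2@(x,ov)#Xs2@(x,\<not>ov)#V2" using L2 by simp
    from swap_decomp[OF this n3[of True f3] n3[of False f3] ps(3)] obtain U3 Xs3 V3 where
      L3: "(?p1 (\<not>f1) @ A @ ?p2 (\<not>f2) @ B) @ ?p3 (\<not>f3) @ C = U3@(x,ov)#Xs3@(x,\<not>ov)#V3"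
      and s3: "set V3 \<union> set U3 = set V2 \<union> set U2" "set Xs3 = set Xs2" by blast
    have "rotate n (fst D') = U3@(x,ov)#Xs3@(x,\<not>ov)#V3" using r' L3 by simp
    from lk_decomp[OF dD' this] have l2: "lk_smooth D' x = LKs (if ov then set V \<union> set U else set Xs) (if ov then set Xs else set V \<union> set U) (snd D')"
      using s1 s2 s3 by simp
    have l1: "lk_smooth D x = LKs (if ov then set V \<union> set U else set Xs) (if ov then set Xs else set V \<union> set U) (snd D)"
      by (rule lk_decomp[OF dD L])
    show ?thesis unfolding l1 l2
    proof (rule LKs_cong)
      fix y assume "(y, True) \<in> (if ov then set V \<union> set U else set Xs)"
      then have "y \<in> crossings D" unfolding crossings_rot[of D m] L by (force split: if_splits)
      then show "snd D' y = snd D y" by (rule sg)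
    qed simp
  qed
  have EXeq: "EXs ov E1 E2 {a,b,c} (snd D') = EXs ov E1 E2 {a,b,c} (snd D)" for ov E1 E2
    unfolding EXs_def using abc sg by (intro sum.cong) auto
  have la: "lk_smooth D' a - lk_smooth D a =
     EXs (h1>h2) (Ea1 a b c h1 h2 h3 (\<not>f1) (\<not>f2) (\<not>f3)) (Ea2 a b c h1 h2 h3 (\<not>f1) (\<not>f2) (\<not>f3)) {a,b,c} (snd D)
   - EXs (h1>h2) (Ea1 a b c h1 h2 h3 f1 f2 f3) (Ea2 a b c h1 h2 h3 f1 f2 f3) {a,b,c} (snd D)"
  proof -
    have e: "LKs (if h1>h2 then set B \<union> set C else set A) (if h1>h2 then set A else set B \<union> set C) (snd D')
           = LKs (if h1>h2 then set B \<union> set C else set A) (if h1>h2 then set A else set B \<union> set C) (snd D)"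
    proof (rule LKs_cong)
      fix y assume "(y, True) \<in> (if h1>h2 then set B \<union> set C else set A)"
      then have "y \<in> crossings D" unfolding crD by (force split: if_splits)
      then show "snd D' y = snd D y" by (rule sg)
    qed simp
    show ?thesis
      using lk_a_form[OF dD r dabc dh kf] lk_a_form[OF dD' r' dabc dh kf] e EXeq by simp
  qed
  have lb: "lk_smooth D' b - lk_smooth D b =
     EXs (h2>h3) (Eb1 a b c h1 h2 h3 (\<not>f1) (\<not>f2) (\<not>f3)) (Eb2 a b c h1 h2 h3 (\<not>f1) (\<not>f2) (\<not>f3)) {a,b,c} (snd D)
   - EXs (h2>h3) (Eb1 a b c h1 h2 h3 f1 f2 f3) (Eb2 a b c h1 h2 h3 f1 f2 f3) {a,b,c} (snd D)"
  proof -
    have e: "LKs (if h2>h3 then set C \<union> set A else set B) (if h2>h3 then set B else set C \<union> set A) (snd D')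
           = LKs (if h2>h3 then set C \<union> set A else set B) (if h2>h3 then set B else set C \<union> set A) (snd D)"
    proof (rule LKs_cong)
      fix y assume "(y, True) \<in> (if h2>h3 then set C \<union> set A else set B)"
      then have "y \<in> crossings D" unfolding crD by (force split: if_splits)
      then show "snd D' y = snd D y" by (rule sg)
    qed simp
    show ?thesis
      using lk_b_form[OF dD r dabc dh kf] lk_b_form[OF dD' r' dabc dh kf] e EXeq by simp
  qed
  have lc: "lk_smooth D' c - lk_smooth D c =
     EXs (h1>h3) (Ec1 a b c h1 h2 h3 (\<not>f1) (\<not>f2) (\<not>f3)) (Ec2 a b c h1 h2 h3 (\<not>f1) (\<not>f2) (\<not>f3)) {a,b,c} (snd D)
   - EXs (h1>h3) (Ec1 a b c h1 h2 h3 f1 f2 f3) (Ec2 a b c h1 h2 h3 f1 f2 f3) {a,b,c} (snd D)"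
  proof -
    have e: "LKs (if h1>h3 then set C else set A \<union> set B) (if h1>h3 then set A \<union> set B else set C) (snd D')
           = LKs (if h1>h3 then set C else set A \<union> set B) (if h1>h3 then set A \<union> set B else set C) (snd D)"
    proof (rule LKs_cong)
      fix y assume "(y, True) \<in> (if h1>h3 then set C else set A \<union> set B)"
      then have "y \<in> crossings D" unfolding crD by (force split: if_splits)
      then show "snd D' y = snd D y" by (rule sg)
    qed simp
    show ?thesis
      using lk_c_form[OF dD r dabc dh kf] lk_c_form[OF dD' r' dabc dh kf] e EXeq by simp
  qed
  define g where "g y = snd D y * (lk_smooth D' y - lk_smooth D y)" for y
  have HD: "H D = - (\<Sum>y\<in>crossings D. snd D y * lk_smooth D y)" using H_formula[OF kd_signs[OF kd]] .
  have HD': "H D' = - (\<Sum>y\<in>crossings D. snd D y * lk_smooth D' y)"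
    using H_formula[OF kd_signs[OF kd']] crD' sg by simp
  have "H D' - H D = - (\<Sum>y\<in>crossings D. g y)"
    unfolding HD HD' g_def by (simp add: sum_subtractf algebra_simps)
  also have "(\<Sum>y\<in>crossings D. g y) = (\<Sum>y\<in>crossings D - {a,b,c}. g y) + (\<Sum>y\<in>{a,b,c}. g y)"
    using abc finite_crossings[of D] by (intro sum.subset_diff) auto
  also have "(\<Sum>y\<in>crossings D - {a,b,c}. g y) = 0"
    using old unfolding g_def by (intro sum.neutral) auto
  also have "(\<Sum>y\<in>{a,b,c}. g y) = g a + g b + g c" using dabc by simp
  finally have "H D' - H D = - (g a + g b + g c)" by simp
  then have dH: "H D' - H D = - (snd D a * (lk_smooth D' a - lk_smooth D a) + snd D b * (lk_smooth D' b - lk_smooth D b)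
        + snd D c * (lk_smooth D' c - lk_smooth D c))" unfolding g_def .
  show ?thesis
    unfolding dH la lb lc St_change_def qd
    by (rule final_arith[OF dabc dh mu sa sb sc])
qed


theorem mainTheorem7:
  shows "(\<forall>D D' :: 'c diagram. knot_diagram D \<and> knot_diagram D' \<and> RI_move D D' \<longrightarrow> H D' = H D)
    \<and> (\<forall>D D' :: 'c diagram. knot_diagram D \<and> knot_diagram D' \<and> RII_unmatched_move D D' \<longrightarrow> H D' = H D)
    \<and> (\<forall>D D' :: 'c diagram. knot_diagram D \<and> knot_diagram D' \<and> RII_matched_move D D' \<longrightarrow> H D' = H D + 1)
    \<and> (\<forall>(D :: 'c diagram) D' q. knot_diagram D \<and> knot_diagram D' \<and> RIII_move D D' q \<longrightarrow>
          H D' - H D \<in> {1, -1} \<and> H D' - H D = St_change q)"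
  using RI_case RII_unmatched_case RII_matched_case RIII_case by blast

end
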